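(* Let $b,\delta\in\mathbb R$ and let $\pi:(0,\infty)\to(0,\infty)$ be integrable and such that $\pi(u)\big/\Big[(1+u)^{-(1+\delta)}\{1+\log(1+u)\}^{-(1+b)}\Big]$ converges to a positive finite constant as $u\to\infty$. Then for every $z\in\mathbb R$, $$\frac{f_\pi(y;z)}{f_\pi(y;0)}\to e^{\delta z}\quad\text{as }y\to\infty\ (y\in\{0,1,2,\dots\}).$$
   Context: For integrable $\pi:(0,\infty)\to(0,\infty)$, $y\in\{0,1,2,\dots\}$ and $z\in\mathbb R$, define $f_\pi(y;z)=\int_0^\infty\pi(u)\frac{(e^zu)^y}{y!}\exp(-e^zu)\,du$, the Poisson likelihood of $y$ with mean $e^zu$ mixed over $u\sim\pi$. *)

theory Defs
  imports "HOL-Analysis.Analysis"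
begin

definition f_mix :: "(real \<Rightarrow> real) \<Rightarrow> nat \<Rightarrow> real \<Rightarrow> real" where
  "f_mix \<pi> y z = (LBINT u:{0<..}. \<pi> u * (exp z * u) ^ y / fact y * exp (- (exp z * u)))"

end

theory Submission
  imports Defs "HOL-Real_Asymp.Real_Asymp"
begin

definition Pp :: "nat \<Rightarrow> real \<Rightarrow> real" where
  "Pp y v = v ^ y / fact y * exp (- v)"

definition Iint :: "(real \<Rightarrow> real) \<Rightarrow> nat \<Rightarrow> real" where
  "Iint H y = (\<integral>v. indicator {0<..} v * (H v * Pp y v) \<partial>lborel)"

lemma pow_fact_le_exp:
  assumes "(x::real) \<ge> 0" shows "x ^ n / fact n \<le> exp x"
proof -
  have s: "(\<lambda>n. x^n /\<^sub>R fact n) sums exp x" by (rule exp_converges)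
  have "(\<Sum>i\<in>{n}. x^i /\<^sub>R fact i) \<le> (\<Sum>i. x^i /\<^sub>R fact i)"
    by (rule sum_le_suminf) (use s assms in \<open>auto simp: sums_iff\<close>)
  also have "\<dots> = exp x" using s by (simp add: sums_iff)
  finally show ?thesis by (simp add: divide_inverse mult.commute)
qed

lemma Pp_nonneg: "v \<ge> 0 \<Longrightarrow> Pp y v \<ge> 0"
  by (simp add: Pp_def)

lemma Pp_le_1: assumes "v \<ge> 0" shows "Pp y v \<le> 1"
proof -
  have "Pp y v \<le> exp v * exp (- v)" unfolding Pp_def
    by (rule mult_right_mono) (use pow_fact_le_exp[OF assms] in auto)
  thus ?thesis by (simp add: exp_minus)
qed

lemma Pp_le_M: assumes "0 \<le> v" "v \<le> M" shows "Pp y v \<le> M ^ y / fact y"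
proof -
  have "Pp y v \<le> M ^ y / fact y * 1" unfolding Pp_def
    by (rule mult_mono) (use assms in \<open>auto intro!: divide_right_mono power_mono\<close>)
  thus ?thesis by simp
qed

lemma Pp_meas[measurable]: "Pp y \<in> borel_measurable borel"
  unfolding Pp_def by measurable

lemma integrable_HP:
  assumes "integrable lborel (\<lambda>v. indicator {0<..} v * H v)"
  shows "integrable lborel (\<lambda>v. indicator {0<..} v * (H v * Pp y v))"
proof (rule Bochner_Integration.integrable_bound[OF assms])
  have m: "(\<lambda>v. indicator {0<..} v * H v) \<in> borel_measurable lborel"
    using assms by (rule borel_measurable_integrable)
  have "(\<lambda>v. (indicator {0<..} v * H v) * Pp y v) \<in> borel_measurable lborel"
    using m by measurable
  thus "(\<lambda>v. indicator {0<..} v * (H v * Pp y v)) \<in> borel_measurable lborel"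
    by (simp add: mult.assoc)
  show "AE x in lborel. norm (indicator {0<..} x * (H x * Pp y x)) \<le> norm (indicator {0<..} x * H x)"
  proof (rule AE_I2)
    fix x :: real
    show "norm (indicator {0<..} x * (H x * Pp y x)) \<le> norm (indicator {0<..} x * H x)"
    proof (cases "x > 0")
      case True
      then have "0 \<le> Pp y x" "Pp y x \<le> 1" using Pp_nonneg Pp_le_1 by auto
      then have "\<bar>H x\<bar> * \<bar>Pp y x\<bar> \<le> \<bar>H x\<bar> * 1" by (intro mult_left_mono) auto
      with True show ?thesis by (simp add: abs_mult)
    qed simp
  qed
qed

lemma ratio_lemma:
  fixes F G :: "real \<Rightarrow> real" and L :: real
  assumes Fnn: "\<And>v. v > 0 \<Longrightarrow> F v \<ge> 0" and Gpos: "\<And>v. v > 0 \<Longrightarrow> G v > 0"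
    and iF: "integrable lborel (\<lambda>v. indicator {0<..} v * F v)"
    and iG: "integrable lborel (\<lambda>v. indicator {0<..} v * G v)"
    and lim: "((\<lambda>v. F v / G v) \<longlongrightarrow> L) at_top"
    and low: "\<And>M. M > 0 \<Longrightarrow> ((\<lambda>y. M ^ y / fact y / Iint G y) \<longlongrightarrow> 0) sequentially"
    and Ipos: "eventually (\<lambda>y. Iint G y > 0) sequentially"
  shows "((\<lambda>y. Iint F y / Iint G y) \<longlongrightarrow> L) sequentially"
proof (rule tendstoI)
  fix \<epsilon> :: real assume \<epsilon>: "\<epsilon> > 0"
  have "eventually (\<lambda>v. dist (F v / G v) L < \<epsilon>/2) at_top"
    by (rule tendstoD[OF lim half_gt_zero[OF \<epsilon>]])
  then obtain M0 where M0: "\<And>v. v \<ge> M0 \<Longrightarrow> \<bar>F v / G v - L\<bar> < \<epsilon>/2"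
    by (auto simp: eventually_at_top_linorder dist_real_def)
  define M where "M = max M0 1"
  have Mpos: "M > 0" by (simp add: M_def)
  define KF where "KF = (\<integral>v. indicator {0<..} v * F v \<partial>lborel)"
  define KG where "KG = (\<integral>v. indicator {0<..} v * G v \<partial>lborel)"
  define K where "K = KF + \<bar>L\<bar> * KG"
  have bound: "\<bar>Iint F y - L * Iint G y\<bar> \<le> \<epsilon>/2 * Iint G y + M ^ y / fact y * K" for y
  proof -
    let ?h = "\<lambda>v. indicator {0<..} v * (F v * Pp y v) - L * (indicator {0<..} v * (G v * Pp y v))"
    let ?g = "\<lambda>v. \<epsilon>/2 * (indicator {0<..} v * (G v * Pp y v)) +
                 M ^ y / fact y * (indicator {0<..} v * F v + \<bar>L\<bar> * (indicator {0<..} v * G v))"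
    have iFP: "integrable lborel (\<lambda>v. indicator {0<..} v * (F v * Pp y v))"
      using integrable_HP[OF iF] .
    have iGP: "integrable lborel (\<lambda>v. indicator {0<..} v * (G v * Pp y v))"
      using integrable_HP[OF iG] .
    have e1: "Iint F y - L * Iint G y = (\<integral>v. ?h v \<partial>lborel)"
      unfolding Iint_def using iFP iGP by (simp add: integral_diff)
    have e2: "\<bar>(\<integral>v. ?h v \<partial>lborel)\<bar> \<le> (\<integral>v. ?g v \<partial>lborel)"
    proof (rule integral_abs_bound_integral)
      show "integrable lborel ?h" using iFP iGP by auto
      show "integrable lborel ?g" using iGP iF iG by auto
      fix v :: real
      show "\<bar>?h v\<bar> \<le> ?g v"
      proof (cases "v > 0")
        case False thus ?thesis by simp
      next
        case True
        have P0: "Pp y v \<ge> 0" using True Pp_nonneg by auto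
        have F0: "F v \<ge> 0" and G0: "G v > 0" using True Fnn Gpos by auto
        have "?h v = (F v - L * G v) * Pp y v" using True by (simp add: algebra_simps)
        then have "\<bar>?h v\<bar> = \<bar>F v - L * G v\<bar> * Pp y v" using P0
          by (simp add: abs_mult)
        also have "\<dots> \<le> \<epsilon>/2 * (G v * Pp y v) + M ^ y / fact y * (F v + \<bar>L\<bar> * G v)"
        proof (cases "v \<ge> M")
          case True
          then have "\<bar>F v / G v - L\<bar> < \<epsilon>/2" using M0 by (simp add: M_def)
          moreover have "F v / G v - L = (F v - L * G v) / G v" using G0 by (simp add: field_simps)
          ultimately have "\<bar>F v - L * G v\<bar> / G v < \<epsilon>/2" using G0 by (simp add: abs_divide)
          then have "\<bar>F v - L * G v\<bar> \<le> \<epsilon>/2 * G v" using G0 by (simp add: divide_less_eq)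
          then have "\<bar>F v - L * G v\<bar> * Pp y v \<le> \<epsilon>/2 * G v * Pp y v"
            using P0 by (intro mult_right_mono) auto
          moreover have "M ^ y / fact y * (F v + \<bar>L\<bar> * G v) \<ge> 0"
            using Mpos F0 G0 by auto
          ultimately show ?thesis by simp
        next
          case False
          have "Pp y v \<le> M ^ y / fact y" using Pp_le_M[of v M y] False True by auto
          moreover have "\<bar>F v - L * G v\<bar> \<le> F v + \<bar>L\<bar> * G v"
            using abs_triangle_ineq4[of "F v" "L * G v"] F0 G0 by (simp add: abs_mult)
          ultimately have "\<bar>F v - L * G v\<bar> * Pp y v \<le> (F v + \<bar>L\<bar> * G v) * (M ^ y / fact y)"
            using P0 by (intro mult_mono) auto
          moreover have "\<epsilon>/2 * (G v * Pp y v) \<ge> 0" using \<epsilon> G0 P0 by auto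
          ultimately show ?thesis by (simp add: mult.commute)
        qed
        also have "\<dots> = ?g v" using True by simp
        finally show ?thesis .
      qed
    qed
    have e3: "(\<integral>v. ?g v \<partial>lborel) = \<epsilon>/2 * Iint G y + M ^ y / fact y * K"
      unfolding Iint_def K_def KF_def KG_def using iGP iF iG
      by (simp add: integral_add)
    show ?thesis using e1 e2 e3 by simp
  qed
  have "((\<lambda>y. K * (M ^ y / fact y / Iint G y)) \<longlongrightarrow> K * 0) sequentially"
    by (intro tendsto_mult tendsto_const low Mpos)
  then have "eventually (\<lambda>y. \<bar>K * (M ^ y / fact y / Iint G y)\<bar> < \<epsilon>/2) sequentially"
    using tendstoD[OF _ half_gt_zero[OF \<epsilon>]] by (force simp: dist_real_def)
  with Ipos show "eventually (\<lambda>y. dist (Iint F y / Iint G y) L < \<epsilon>) sequentially"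
  proof eventually_elim
    case (elim y)
    have "dist (Iint F y / Iint G y) L = \<bar>Iint F y - L * Iint G y\<bar> / Iint G y"
      using elim by (simp add: dist_real_def field_simps)
    also have "\<dots> \<le> (\<epsilon>/2 * Iint G y + M ^ y / fact y * K) / Iint G y"
      using bound elim by (intro divide_right_mono) auto
    also have "\<dots> = \<epsilon>/2 + K * (M ^ y / fact y / Iint G y)"
      using elim by (simp add: field_simps)
    also have "\<dots> < \<epsilon>" using elim by linarith
    finally show ?case .
  qed
qed


definition gg :: "real \<Rightarrow> real \<Rightarrow> real \<Rightarrow> real" where
  "gg b \<delta> u = (1 + u) powr (-(1 + \<delta>)) * (1 + ln (1 + u)) powr (-(1 + b))"

definition hh :: "real \<Rightarrow> real \<Rightarrow> real \<Rightarrow> real" where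
  "hh b \<delta> y = (2 + y) powr (-\<bar>1 + \<delta>\<bar>) * (1 + ln (2 + y)) powr (-\<bar>1 + b\<bar>)"

lemma gg_pos: assumes "u \<ge> 0" shows "gg b \<delta> u > 0"
proof -
  have "ln (1 + u) \<ge> 0" using assms by simp
  then have "1 + ln (1 + u) > 0" by linarith
  moreover have "1 + u > 0" using assms by simp
  ultimately show ?thesis unfolding gg_def by simp
qed

lemma powr_lower:
  fixes x X e :: real
  assumes "1 \<le> x" "x \<le> X" shows "X powr (-\<bar>e\<bar>) \<le> x powr e"
proof (cases "e \<ge> 0")
  case True
  have "X powr (-\<bar>e\<bar>) \<le> X powr 0" using assms True by (intro powr_mono) auto
  then have "X powr (-\<bar>e\<bar>) \<le> 1" using assms by simp
  moreover have "1 \<le> x powr e" using assms True by (simp add: ge_one_powr_ge_zero)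
  ultimately show ?thesis by linarith
next
  case False
  then have "X powr e \<le> x powr e" using assms by (intro powr_mono2') auto
  thus ?thesis using False by simp
qed

lemma hh_asymp: "((\<lambda>y::real. (1/2) powr y / ((2 + y) powr (-p) * (1 + ln (2 + y)) powr (-q))) \<longlongrightarrow> 0) at_top"
  by real_asymp


lemma lower_bound:
  fixes \<pi> :: "real \<Rightarrow> real" and b \<delta> c :: real
  assumes pos: "\<And>u. u > 0 \<Longrightarrow> \<pi> u > 0"
    and integ: "integrable lborel (\<lambda>v. indicator {0<..} v * \<pi> v)"
    and c: "c > 0"
    and tl: "((\<lambda>u. \<pi> u / gg b \<delta> u) \<longlongrightarrow> c) at_top"
  shows "\<exists>N. \<forall>n. real n \<ge> N \<longrightarrow>
     Iint \<pi> n \<ge> c/2 * hh b \<delta> (real n) * ((real n) ^ n * exp (-(real n + 1)) / fact n)"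
proof -
  have "eventually (\<lambda>u. c/2 < \<pi> u / gg b \<delta> u) at_top"
    using tl c by (intro order_tendstoD(1)) auto
  then obtain M0 where M0: "\<And>u. u \<ge> M0 \<Longrightarrow> c/2 < \<pi> u / gg b \<delta> u"
    by (auto simp: eventually_at_top_linorder)
  define N where "N = max M0 1"
  have "real n \<ge> N \<longrightarrow>
     Iint \<pi> n \<ge> c/2 * hh b \<delta> (real n) * ((real n) ^ n * exp (-(real n + 1)) / fact n)" for n
  proof
    assume nN: "real n \<ge> N"
    define y where "y = real n"
    have y1: "y \<ge> 1" and yM: "y \<ge> M0" using nN by (auto simp: N_def y_def)
    define C where "C = c/2 * hh b \<delta> y * (y ^ n * exp (-(y + 1)) / fact n)"
    have C0: "C \<ge> 0" unfolding C_def hh_def using c y1 by simp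
    have pw: "indicator {y..y+1} v * C \<le> indicator {0<..} v * (\<pi> v * Pp n v)" for v
    proof (cases "v \<in> {y..y+1}")
      case True
      then have v: "y \<le> v" "v \<le> y + 1" by auto
      then have vpos: "v > 0" using y1 by auto
      have g0: "gg b \<delta> v > 0" using vpos gg_pos by auto
      have "c/2 < \<pi> v / gg b \<delta> v" using M0 v yM by auto
      then have pi1: "c/2 * gg b \<delta> v \<le> \<pi> v" using g0 by (simp add: pos_less_divide_eq less_imp_le)
      have l0: "ln (1 + v) \<ge> 0" using vpos by simp
      have "(2 + y) powr (-\<bar>1 + \<delta>\<bar>) \<le> (1 + v) powr (-(1 + \<delta>))"
        using powr_lower[of "1 + v" "2 + y" "-(1+\<delta>)"] v vpos unfolding abs_minus_cancel by simp
      moreover have "(1 + ln (2 + y)) powr (-\<bar>1 + b\<bar>) \<le> (1 + ln (1 + v)) powr (-(1 + b))"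
        using powr_lower[of "1 + ln (1 + v)" "1 + ln (2 + y)" "-(1+b)"] v vpos l0 unfolding abs_minus_cancel by simp
      ultimately have hg: "hh b \<delta> y \<le> gg b \<delta> v" unfolding hh_def gg_def
        by (intro mult_mono) auto
      have "y ^ n \<le> v ^ n" using v y1 by (intro power_mono) auto
      moreover have "exp (-(y + 1)) \<le> exp (- v)" using v by simp
      moreover have "0 \<le> v ^ n" using vpos by simp
      ultimately have pp: "y ^ n * exp (-(y + 1)) / fact n \<le> Pp n v" unfolding Pp_def
        by (auto intro!: divide_right_mono mult_mono simp: divide_simps)
      have "C \<le> c/2 * gg b \<delta> v * Pp n v" unfolding C_def using c hg pp y1 g0
        by (intro mult_mono) (auto simp: hh_def)
      also have "\<dots> \<le> \<pi> v * Pp n v" using pi1 Pp_nonneg[of v n] vpos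
        by (intro mult_right_mono) auto
      finally show ?thesis using True vpos by simp
    next
      case False
      have "0 \<le> indicator {0<..} v * (\<pi> v * Pp n v)"
        using pos[of v] Pp_nonneg[of v n] by (cases "v > 0") auto
      thus ?thesis using False by simp
    qed
    have "(\<integral>v. indicator {y..y+1} v * C \<partial>lborel) \<le> Iint \<pi> n"
      unfolding Iint_def
      by (intro integral_mono pw integrable_mult_left integrable_real_indicator integrable_HP[OF integ]) auto
    moreover have "(\<integral>v. indicator {y..y+1} v * C \<partial>lborel) = C" by simp
    ultimately show "Iint \<pi> n \<ge> c/2 * hh b \<delta> (real n) * ((real n) ^ n * exp (-(real n + 1)) / fact n)"
      by (simp add: C_def y_def)
  qed
  thus ?thesis by blast
qed


lemma hh_pos: "y \<ge> 0 \<Longrightarrow> hh b \<delta> y > 0"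
proof -
  assume y: "y \<ge> 0"
  have "ln (2 + y) \<ge> 0" using y by simp
  then have "1 + ln (2 + y) > 0" by linarith
  thus ?thesis unfolding hh_def using y by simp
qed

lemma exp_nat_plus1: "exp (-(real n + 1)) = 1 / (exp 1 * exp 1 ^ n)"
proof -
  have "exp (real n) = exp 1 ^ n" using exp_of_nat_mult[of n 1] by simp
  moreover have "exp (-(real n + 1)) = inverse (exp (real n) * exp 1)"
    by (simp only: exp_minus exp_add)
  ultimately show ?thesis by (simp add: field_simps)
qed

lemma lower_consequences:
  fixes \<pi> :: "real \<Rightarrow> real" and b \<delta> c :: real
  assumes pos: "\<And>u. u > 0 \<Longrightarrow> \<pi> u > 0"
    and integ: "integrable lborel (\<lambda>v. indicator {0<..} v * \<pi> v)"
    and c: "c > 0"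
    and tl: "((\<lambda>u. \<pi> u / gg b \<delta> u) \<longlongrightarrow> c) at_top"
  shows "eventually (\<lambda>y. Iint \<pi> y > 0) sequentially"
    and "\<And>M. M > 0 \<Longrightarrow> ((\<lambda>y. M ^ y / fact y / Iint \<pi> y) \<longlongrightarrow> 0) sequentially"
proof -
  obtain N where N: "\<And>n. real n \<ge> N \<Longrightarrow>
     Iint \<pi> n \<ge> c/2 * hh b \<delta> (real n) * ((real n) ^ n * exp (-(real n + 1)) / fact n)"
    using lower_bound[OF pos integ c tl] by blast
  define Q where "Q n = c/2 * hh b \<delta> (real n) * ((real n) ^ n * exp (-(real n + 1)) / fact n)" for n
  have Qpos: "Q n > 0" if "n \<ge> 1" for n
    unfolding Q_def using c hh_pos[of "real n" b \<delta>] that by simp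
  have evge: "eventually (\<lambda>n. real n \<ge> T) sequentially" for T :: real
  proof -
    obtain K :: nat where K: "T \<le> real K" using real_arch_simple by blast
    show ?thesis by (rule eventually_sequentiallyI[of K]) (use K in auto)
  qed
  have evQ: "eventually (\<lambda>n. Q n > 0 \<and> Iint \<pi> n \<ge> Q n) sequentially"
    using evge[of "max N 1"]
  proof eventually_elim
    case (elim n)
    then have "n \<ge> 1" by simp
    then show ?case using Qpos N[of n] elim unfolding Q_def by auto
  qed
  show "eventually (\<lambda>y. Iint \<pi> y > 0) sequentially"
    using evQ by eventually_elim auto
  fix M :: real assume M: "M > 0"
  have lim0: "((\<lambda>n. 2/c * exp 1 * ((1/2) ^ n / hh b \<delta> (real n))) \<longlongrightarrow> 0) sequentially"
  proof -
    have "((\<lambda>y::real. (1/2) powr y / ((2 + y) powr (-\<bar>1 + \<delta>\<bar>) * (1 + ln (2 + y)) powr (-\<bar>1 + b\<bar>))) \<longlongrightarrow> 0) at_top"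
      by (rule hh_asymp)
    then have "((\<lambda>n. (1/2) powr real n / hh b \<delta> (real n)) \<longlongrightarrow> 0) sequentially"
      unfolding hh_def by (rule filterlim_compose[OF _ filterlim_real_sequentially])
    then have "((\<lambda>n. (1/2) ^ n / hh b \<delta> (real n)) \<longlongrightarrow> 0) sequentially"
      by (simp add: powr_realpow)
    from tendsto_mult[OF tendsto_const this, of "2/c * exp 1"] show ?thesis by (simp only: mult_zero_right)
  qed
  show "((\<lambda>y. M ^ y / fact y / Iint \<pi> y) \<longlongrightarrow> 0) sequentially"
  proof (rule tendsto_sandwich[OF _ _ tendsto_const lim0])
    show "eventually (\<lambda>n. 0 \<le> M ^ n / fact n / Iint \<pi> n) sequentially"
      using evQ by eventually_elim (use M in auto)
    show "eventually (\<lambda>n. M ^ n / fact n / Iint \<pi> n \<le> 2/c * exp 1 * ((1/2) ^ n / hh b \<delta> (real n))) sequentially"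
      using evQ evge[of "max 1 (2 * M * exp 1)"]
    proof eventually_elim
      case (elim n)
      have n1: "real n \<ge> 1" and n2: "real n \<ge> 2 * M * exp 1" using elim by auto
      have hpos: "hh b \<delta> (real n) > 0" using hh_pos[of "real n"] n1 by simp
      have "M ^ n / fact n / Iint \<pi> n \<le> M ^ n / fact n / Q n"
        using elim M by (intro divide_left_mono) auto
      also have "\<dots> = 2/c * exp 1 * ((M * exp 1 / real n) ^ n / hh b \<delta> (real n))"
        unfolding Q_def exp_nat_plus1 using c hpos n1
        by (simp add: field_simps power_divide power_mult_distrib)
      also have "\<dots> \<le> 2/c * exp 1 * ((1/2) ^ n / hh b \<delta> (real n))"
      proof -
        have "M * exp 1 / real n \<le> 1/2" using n1 n2 by (simp add: field_simps)
        then have "(M * exp 1 / real n) ^ n \<le> (1/2) ^ n"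
          using M n1 by (intro power_mono) auto
        then show ?thesis using c hpos by (intro mult_left_mono divide_right_mono) auto
      qed
      finally show ?case .
    qed
  qed
qed


lemma gg_ratio_asymp:
  assumes "(a::real) > 0"
  shows "((\<lambda>v. gg b d (v / a) / gg b d v) \<longlongrightarrow> inverse a powr (-1 - d)) at_top"
  unfolding gg_def using assms by real_asymp

lemma indic_scale: "(a::real) > 0 \<Longrightarrow> indicator {0<..} (a * x) = (indicator {0<..} x :: real)"
  by (simp add: indicator_def zero_less_mult_iff)

lemma indic_scale': "(a::real) > 0 \<Longrightarrow> indicator {0<..} (x / a) = (indicator {0<..} x :: real)"
  by (simp add: indicator_def zero_less_divide_iff)

theorem lemmaS1:
  fixes \<pi> :: "real \<Rightarrow> real" and b \<delta> :: real
  assumes pos: "\<And>u. u > 0 \<Longrightarrow> \<pi> u > 0"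
    and integ: "set_integrable lborel {0<..} \<pi>"
    and tail: "\<exists>c>0. ((\<lambda>u. \<pi> u / ((1 + u) powr (-(1 + \<delta>)) * (1 + ln (1 + u)) powr (-(1 + b))))
                 \<longlongrightarrow> c) at_top"
  shows "\<forall>z::real. ((\<lambda>y. f_mix \<pi> y z / f_mix \<pi> y 0) \<longlongrightarrow> exp (\<delta> * z)) sequentially"
proof
  fix z :: real
  obtain c where c: "c > 0" and tl: "((\<lambda>u. \<pi> u / gg b \<delta> u) \<longlongrightarrow> c) at_top"
    using tail unfolding gg_def by blast
  have integ': "integrable lborel (\<lambda>v. indicator {0<..} v * \<pi> v)"
    using integ by (simp add: set_integrable_def)
  define a where "a = exp z"
  have a: "a > 0" by (simp add: a_def)
  define F where "F v = \<pi> (v / a) / a" for v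
  have iF: "integrable lborel (\<lambda>v. indicator {0<..} v * F v)"
  proof -
    have "integrable lborel (\<lambda>x. indicator {0<..} (0 + 1/a * x) * \<pi> (0 + 1/a * x))"
      using a by (intro lborel_integrable_real_affine[OF integ']) auto
    then have "integrable lborel (\<lambda>x. indicator {0<..} (0 + 1/a * x) * \<pi> (0 + 1/a * x) / a)"
      by auto
    moreover have "(\<lambda>x. indicator {0<..} (0 + 1/a * x) * \<pi> (0 + 1/a * x) / a) = (\<lambda>v. indicator {0<..} v * F v)"
      using a by (auto simp: fun_eq_iff F_def indic_scale')
    ultimately show ?thesis by simp
  qed
  have Fnn: "F v \<ge> 0" if "v > 0" for v
    using pos[of "v/a"] a that unfolding F_def by (simp add: less_imp_le)
  have lim: "((\<lambda>v. F v / \<pi> v) \<longlongrightarrow> exp (\<delta> * z)) at_top"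
  proof -
    have fl: "filterlim (\<lambda>v. v / a) at_top at_top"
    proof -
      have "filterlim (\<lambda>v::real. 1/a * v) at_top at_top"
        by (rule filterlim_tendsto_pos_mult_at_top[OF tendsto_const _ filterlim_ident]) (use a in simp)
      thus ?thesis by simp
    qed
    have A: "((\<lambda>v. \<pi> (v / a) / gg b \<delta> (v / a)) \<longlongrightarrow> c) at_top"
      by (rule filterlim_compose[OF tl fl])
    have B: "((\<lambda>v. inverse (\<pi> v / gg b \<delta> v)) \<longlongrightarrow> inverse c) at_top"
      using c by (intro tendsto_inverse tl) auto
    have C: "((\<lambda>v. gg b \<delta> (v / a) / gg b \<delta> v) \<longlongrightarrow> inverse a powr (-1 - \<delta>)) at_top"
      by (rule gg_ratio_asymp[OF a])
    have prod: "((\<lambda>v. 1/a * (\<pi> (v / a) / gg b \<delta> (v / a)) * inverse (\<pi> v / gg b \<delta> v) * (gg b \<delta> (v / a) / gg b \<delta> v))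
       \<longlongrightarrow> 1/a * c * inverse c * inverse a powr (-1 - \<delta>)) at_top"
      by (intro tendsto_mult tendsto_const A B C)
    have val: "1/a * c * inverse c * inverse a powr (-1 - \<delta>) = exp (\<delta> * z)"
    proof -
      have "inverse a powr (-1 - \<delta>) = a powr (1 + \<delta>)"
        using a by (simp add: inverse_powr powr_minus[symmetric] add.commute)
      also have "\<dots> = exp ((1 + \<delta>) * z)" by (simp add: a_def powr_def)
      finally show ?thesis using c by (simp add: a_def field_simps exp_add[symmetric] exp_diff[symmetric])
    qed
    have ev: "eventually (\<lambda>v. 1/a * (\<pi> (v / a) / gg b \<delta> (v / a)) * inverse (\<pi> v / gg b \<delta> v) * (gg b \<delta> (v / a) / gg b \<delta> v)
        = F v / \<pi> v) at_top"
      using eventually_gt_at_top[of 0]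
    proof eventually_elim
      case (elim v)
      have "gg b \<delta> (v/a) > 0" "gg b \<delta> v > 0" "\<pi> v > 0" "\<pi> (v/a) > 0"
        using elim a gg_pos pos by auto
      thus ?case unfolding F_def by (simp add: field_simps)
    qed
    show ?thesis using Lim_transform_eventually[OF prod[unfolded val] ev] .
  qed
  have Gpos: "\<And>v. v > 0 \<Longrightarrow> \<pi> v > 0" using pos .
  have R: "((\<lambda>y. Iint F y / Iint \<pi> y) \<longlongrightarrow> exp (\<delta> * z)) sequentially"
    by (rule ratio_lemma[OF Fnn Gpos iF integ' lim lower_consequences(2)[OF pos integ' c tl]
                         lower_consequences(1)[OF pos integ' c tl]]) auto
  have e0: "f_mix \<pi> y 0 = Iint \<pi> y" for y
    unfolding f_mix_def Iint_def set_lebesgue_integral_def Pp_def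
    by (intro Bochner_Integration.integral_cong) auto
  have ez: "f_mix \<pi> y z = Iint F y" for y
  proof -
    have "f_mix \<pi> y z = (\<integral>u. indicator {0<..} u * (\<pi> u * Pp y (a * u)) \<partial>lborel)"
      unfolding f_mix_def set_lebesgue_integral_def Pp_def a_def
      by (intro Bochner_Integration.integral_cong) auto
    also have "\<dots> = (\<integral>u. a * (indicator {0<..} (0 + a * u) * (F (0 + a * u) * Pp y (0 + a * u))) \<partial>lborel)"
      using a by (intro Bochner_Integration.integral_cong) (auto simp: F_def indic_scale)
    also have "\<dots> = Iint F y"
      unfolding Iint_def integral_mult_right_zero
      using a lborel_integral_real_affine[of a "\<lambda>v. indicator {0<..} v * (F v * Pp y v)" 0]
      by simp
    finally show ?thesis .
  qed
  show "((\<lambda>y. f_mix \<pi> y z / f_mix \<pi> y 0) \<longlongrightarrow> exp (\<delta> * z)) sequentially"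
    using R by (simp add: e0 ez)
qed

end
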